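(* Let $d\ge2$, equip $\mathbb{R}^d$ with the canonical Euclidean norm $|\cdot|$, and let $X$ be an $\mathbb{R}^d$-valued random vector with $\mathbb{E}|X|^2<+\infty$ whose distribution $\mu$ assigns no mass to hyperplanes and has convex support $C_\mu=\operatorname{supp}(\mu)$. Let $(a_N)_{N\ge1}$ be an $L^2$-optimal greedy quantization sequence for $X$, fix $N\ge2$, and write $a^{(N-1)}=\{a_1,\dots,a_{N-1}\}$, $a^{(N)}=\{a_1,\dots,a_N\}$. Let $a_{[0]}\in C_\mu\setminus a^{(N-1)}$ and define recursively $$a_{[n+1]}=\mathbb{E}\big(X\,\big|\,X\in W_{N,[n]}\big),\quad n\ge0,$$ where $W_{N,[n]}=\{\xi\in\mathbb{R}^d:|\xi-a_{[n]}|\le d(\xi,a^{(N-1)})\}$ is the closed Voronoi cell of $a_{[n]}$ induced by $a^{(N-1)}\cup\{a_{[n]}\}$. Then $(a_{[n]})_{n\ge0}$ is bounded and there exists $\ell\in\big[e_2(a^{(N)},X),\,e_2(a^{(N-1)}\cup\{a_{[0]}\},X)\big]$ such that the set of limiting points of $(a_{[n]})_{n\ge0}$ is a connected compact subset of $$\Lambda_\ell=\Big\{a\in\mathbb{R}^d:\ e_2\big(a^{(N-1)}\cup\{a\},X\big)=\ell\ \text{ and }\ a=\mathbb{E}\big(X\,\big|\,X\in W_{N,a}\big)\Big\},$$ where $W_{N,a}=\{\xi:|\xi-a|\le d(\xi,a^{(N-1)})\}$. In particular $e_2(a^{(N-1)}\cup\{a_{[n]}\},X)\to\ell$ as $n\to+\infty$.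 Furthermore, if $\Lambda_\ell$ is locally finite (has finite intersection with every compact subset of $\mathbb{R}^d$), then $a_{[n]}$ converges to some point of $\Lambda_\ell$.
   Context: For $\Gamma\subset\mathbb{R}^d$ put $e_2(\Gamma,X)=\big(\mathbb{E}\,d(X,\Gamma)^2\big)^{1/2}$ with $d(\xi,\Gamma)=\inf_{a\in\Gamma}|\xi-a|$ ($d(\xi,\emptyset)=+\infty$). A sequence $(a_N)_{N\ge1}$ is an $L^2$-optimal greedy quantization sequence if, writing $a^{(N)}=\{a_1,\dots,a_N\}$ and $a^{(0)}=\emptyset$, $a_{N+1}\in\operatorname{argmin}_{\xi\in\mathbb{R}^d}e_2(a^{(N)}\cup\{\xi\},X)$ for every $N\ge0$. *)

theory Defs
  imports "HOL-Probability.Probability"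
begin

definition quant_err2 :: "'p measure \<Rightarrow> ('p \<Rightarrow> 'a::euclidean_space) \<Rightarrow> 'a set \<Rightarrow> real" where
  "quant_err2 M X \<Gamma> = sqrt (\<integral>\<omega>. (infdist (X \<omega>) \<Gamma>)\<^sup>2 \<partial>M)"

definition greedy_quant_seq :: "'p measure \<Rightarrow> ('p \<Rightarrow> 'a::euclidean_space) \<Rightarrow> (nat \<Rightarrow> 'a) \<Rightarrow> bool" where
  "greedy_quant_seq M X a \<longleftrightarrow>
     (\<forall>N. \<forall>\<xi>. quant_err2 M X (a ` {1..N} \<union> {a (Suc N)}) \<le> quant_err2 M X (a ` {1..N} \<union> {\<xi>}))"

definition distr_support :: "'p measure \<Rightarrow> ('p \<Rightarrow> 'a::euclidean_space) \<Rightarrow> 'a set" where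
  "distr_support M X = {x. \<forall>r>0. measure M {\<omega>\<in>space M. X \<omega> \<in> ball x r} > 0}"

definition voronoi_cell :: "'a::euclidean_space set \<Rightarrow> 'a \<Rightarrow> 'a set" where
  "voronoi_cell A a = {\<xi>. dist \<xi> a \<le> infdist \<xi> A}"

definition cond_mean :: "'p measure \<Rightarrow> ('p \<Rightarrow> 'a::euclidean_space) \<Rightarrow> 'a set \<Rightarrow> 'a" where
  "cond_mean M X W = (1 / measure M {\<omega>\<in>space M. X \<omega> \<in> W}) *\<^sub>R
      (\<integral>\<omega>. indicator {\<omega>\<in>space M. X \<omega> \<in> W} \<omega> *\<^sub>R X \<omega> \<partial>M)"

definition limit_points :: "(nat \<Rightarrow> 'a::topological_space) \<Rightarrow> 'a set" where
  "limit_points b = {x. \<exists>r. strict_mono r \<and> (b \<circ> r) \<longlonglongrightarrow> x}"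

end

theory Submission
  imports Defs
begin


lemma subseq_choice:
  fixes P :: "nat \<Rightarrow> nat \<Rightarrow> bool"
  assumes "\<And>i n. \<exists>k\<ge>n. P i k"
  shows "\<exists>r. strict_mono r \<and> (\<forall>i. P i (r i))"
proof -
  have "\<exists>f. \<forall>n. P n (f n) \<and> f n < f (Suc n)"
  proof (rule dependent_nat_choice)
    show "\<exists>x. P 0 x" using assms[of 0 0] by blast
    fix x n assume "P n x"
    show "\<exists>y. P (Suc n) y \<and> x < y" using assms[where i="Suc n" and n="Suc x"] by (auto simp: Suc_le_eq)
  qed
  then obtain f where "\<And>n. P n (f n)" "\<And>n. f n < f (Suc n)" by blast
  then show ?thesis by (intro exI[of _ f]) (auto simp: strict_mono_Suc_iff)
qed

lemma limit_points_iff: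
  fixes b :: "nat \<Rightarrow> 'a::metric_space"
  shows "x \<in> limit_points b \<longleftrightarrow> (\<forall>e>0. \<forall>n. \<exists>k\<ge>n. dist (b k) x < e)"
proof
  assume "x \<in> limit_points b"
  then obtain r where r: "strict_mono r" "(b \<circ> r) \<longlonglongrightarrow> x" by (auto simp: limit_points_def)
  show "\<forall>e>0. \<forall>n. \<exists>k\<ge>n. dist (b k) x < e"
  proof (intro allI impI)
    fix e :: real and n assume "e > 0"
    then obtain N where N: "\<And>m. m \<ge> N \<Longrightarrow> dist ((b \<circ> r) m) x < e"
      using r(2) unfolding lim_sequentially by blast
    have "r (max N n) \<ge> n" using seq_suble[OF r(1), of "max N n"] by simp
    then show "\<exists>k\<ge>n. dist (b k) x < e" using N[of "max N n"] by auto
  qed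
next
  assume H: "\<forall>e>0. \<forall>n. \<exists>k\<ge>n. dist (b k) x < e"
  have "\<exists>r. strict_mono r \<and> (\<forall>i. dist (b (r i)) x < 1 / Suc i)"
    by (rule subseq_choice) (use H in simp)
  then obtain r where r: "strict_mono r" "\<And>i. dist (b (r i)) x < 1 / Suc i"
    by blast
  have "(b \<circ> r) \<longlonglongrightarrow> x"
    unfolding lim_sequentially
  proof (intro allI impI)
    fix e :: real assume "e > 0"
    then obtain N where N: "1 / Suc N < e" using reals_Archimedean by (metis inverse_eq_divide)
    show "\<exists>N. \<forall>n\<ge>N. dist ((b \<circ> r) n) x < e"
    proof (intro exI allI impI)
      fix n assume "n \<ge> N"
      then have "1 / real (Suc n) \<le> 1 / Suc N" by (simp add: frac_le)
      then show "dist ((b \<circ> r) n) x < e" using r(2)[of n] N by simp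
    qed
  qed
  with r(1) show "x \<in> limit_points b" by (auto simp: limit_points_def)
qed

lemma limit_points_closed:
  fixes b :: "nat \<Rightarrow> 'a::metric_space"
  shows "closed (limit_points b)"
proof -
  have "closure (limit_points b) \<subseteq> limit_points b"
  proof
    fix x assume "x \<in> closure (limit_points b)"
    then have x: "\<forall>e>0. \<exists>y\<in>limit_points b. dist y x < e" by (simp add: closure_approachable)
    show "x \<in> limit_points b" unfolding limit_points_iff
    proof (intro allI impI)
      fix e :: real and n assume "e > 0"
      then obtain y where y: "y \<in> limit_points b" "dist y x < e/2" using x by (meson half_gt_zero)
      then obtain k where "k \<ge> n" "dist (b k) y < e/2" using \<open>e>0\<close> unfolding limit_points_iff
        by (meson half_gt_zero)
      then show "\<exists>k\<ge>n. dist (b k) x < e" using y(2) dist_triangle_half_l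
        by (metis dist_commute)
    qed
  qed
  then show ?thesis using closure_subset_eq by blast
qed

lemma limit_points_subset_closure:
  fixes b :: "nat \<Rightarrow> 'a::metric_space"
  shows "limit_points b \<subseteq> closure (range b)"
proof
  fix x assume "x \<in> limit_points b"
  then have "\<forall>e>0. \<exists>k. dist (b k) x < e" unfolding limit_points_iff by blast
  then show "x \<in> closure (range b)" unfolding closure_approachable by blast
qed

lemma limit_point_in_closed:
  fixes b :: "nat \<Rightarrow> 'a::euclidean_space"
  assumes "bounded (range b)" "closed S" "\<And>n. \<exists>k\<ge>n. b k \<in> S"
  shows "\<exists>x\<in>S. x \<in> limit_points b"
proof -
  have "\<exists>r::nat\<Rightarrow>nat. strict_mono r \<and> (\<forall>i. b (r i) \<in> S)"
    by (rule subseq_choice[where P="\<lambda>i k. b k \<in> S"]) (use assms(3) in simp)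
  then obtain r :: "nat \<Rightarrow> nat" where r: "strict_mono r" "\<And>i. b (r i) \<in> S"
    by blast
  obtain R where R: "\<And>n. b n \<in> cball 0 R" using assms(1) by (auto simp: bounded_iff mem_cball_0)
  have "\<forall>n. (b \<circ> r) n \<in> cball 0 R \<inter> S" using R r by auto
  moreover have "compact (cball 0 R \<inter> S)" using assms(2) by (simp add: compact_Int_closed)
  ultimately obtain l q where l: "l \<in> cball 0 R \<inter> S" "strict_mono q" "((b \<circ> r) \<circ> q) \<longlonglongrightarrow> l"
    unfolding compact_def by blast
  have "strict_mono (r \<circ> q)" using r(1) l(2) by (simp add: strict_mono_o)
  then have "l \<in> limit_points b" using l(3) by (auto simp: limit_points_def o_assoc)
  with l(1) show ?thesis by blast
qed

lemma limit_points_nonempty: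
  fixes b :: "nat \<Rightarrow> 'a::euclidean_space"
  assumes "bounded (range b)"
  shows "limit_points b \<noteq> {}"
  using limit_point_in_closed[OF assms closed_UNIV] by blast

lemma limit_points_compact:
  fixes b :: "nat \<Rightarrow> 'a::euclidean_space"
  assumes "bounded (range b)"
  shows "compact (limit_points b)"
  using limit_points_closed limit_points_subset_closure assms
  by (metis bounded_closure bounded_subset compact_eq_bounded_closed)

lemma limit_points_single_conv:
  fixes b :: "nat \<Rightarrow> 'a::euclidean_space"
  assumes "bounded (range b)" "limit_points b = {x}"
  shows "b \<longlonglongrightarrow> x"
proof (rule ccontr)
  assume "\<not> b \<longlonglongrightarrow> x"
  then obtain e where e: "e > 0" "\<And>N. \<exists>n\<ge>N. \<not> dist (b n) x < e"
    unfolding lim_sequentially by blast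
  have "closed {y. e \<le> dist y x}"
    by (intro closed_Collect_le continuous_intros)
  from limit_point_in_closed[OF assms(1) this] e obtain y where "y \<in> {y. e \<le> dist y x}" "y \<in> limit_points b"
    by (metis mem_Collect_eq not_less)
  with assms(2) e(1) show False by auto
qed

lemma limit_points_connected:
  fixes b :: "nat \<Rightarrow> 'a::euclidean_space"
  assumes bnd: "bounded (range b)" and step: "(\<lambda>n. dist (b (Suc n)) (b n)) \<longlonglongrightarrow> 0"
  shows "connected (limit_points b)"
proof (rule ccontr)
  define L where "L = limit_points b"
  assume "\<not> connected (limit_points b)"
  then obtain E1 E2 where E: "closed E1" "closed E2" "L \<subseteq> E1 \<union> E2" "E1 \<inter> E2 \<inter> L = {}"
    "E1 \<inter> L \<noteq> {}" "E2 \<inter> L \<noteq> {}"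
    unfolding connected_closed L_def by blast
  define P where "P = E1 \<inter> L"
  define Q where "Q = E2 \<inter> L"
  have cL: "compact L" using limit_points_compact[OF bnd] by (simp add: L_def)
  have cP: "compact P" "closed P" unfolding P_def using cL E(1)
    by (auto simp: closed_Int_compact compact_imp_closed)
  have cQ: "compact Q" "closed Q" unfolding Q_def using cL E(2)
    by (auto simp: closed_Int_compact compact_imp_closed)
  have ne: "P \<noteq> {}" "Q \<noteq> {}" using E(5,6) by (auto simp: P_def Q_def)
  have "P \<inter> Q = {}" using E(4) by (auto simp: P_def Q_def)
  from separate_compact_closed[OF cP(1) cQ(2) this] obtain d where d: "d > 0"
    "\<And>p q. p \<in> P \<Longrightarrow> q \<in> Q \<Longrightarrow> d \<le> dist p q" by blast
  have sumd: "d \<le> infdist y P + infdist y Q" for y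
  proof -
    obtain p where p: "p \<in> P" "infdist y P = dist y p" using infdist_attains_inf[OF cP(2) ne(1)] by blast
    obtain q where q: "q \<in> Q" "infdist y Q = dist y q" using infdist_attains_inf[OF cQ(2) ne(2)] by blast
    have "d \<le> dist p q" using d p q by blast
    also have "\<dots> \<le> dist y p + dist y q" by (metis dist_commute dist_triangle)
    finally show ?thesis using p q by simp
  qed
  from step d(1) obtain n0 where n0: "\<And>k. k \<ge> n0 \<Longrightarrow> dist (b (Suc k)) (b k) < d/3"
    unfolding lim_sequentially by (metis dist_real_def diff_zero abs_of_nonneg zero_le_dist divide_pos_pos zero_less_numeral)
  define S where "S = {y. d/3 \<le> infdist y P \<and> d/3 \<le> infdist y Q}"
  have clS: "closed S" unfolding S_def
    by (intro closed_Collect_conj closed_Collect_le continuous_on_infdist continuous_on_id continuous_on_const)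
  have freq: "\<exists>k\<ge>n. b k \<in> S" for n
  proof -
    define m where "m = max n n0"
    obtain p where "p \<in> P" using ne by blast
    then have "p \<in> L" by (simp add: P_def)
    then obtain k1 where k1: "k1 \<ge> m" "dist (b k1) p < d/3" using d(1)
      unfolding L_def limit_points_iff by (meson divide_pos_pos zero_less_numeral)
    have ik1: "infdist (b k1) P < d/3" using k1(2) infdist_le[OF \<open>p \<in> P\<close>, of "b k1"] by linarith
    obtain q where "q \<in> Q" using ne by blast
    then have "q \<in> L" by (simp add: Q_def)
    then obtain k2 where k2: "k2 \<ge> k1" "dist (b k2) q < d/3" using d(1)
      unfolding L_def limit_points_iff by (meson divide_pos_pos zero_less_numeral)
    have "infdist (b k2) Q < d/3" using k2(2) infdist_le[OF \<open>q \<in> Q\<close>, of "b k2"] by linarith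
    then have ik2: "d/3 \<le> infdist (b k2) P" using sumd[of "b k2"] d(1) by linarith
    define k where "k = (LEAST k. k1 \<le> k \<and> d/3 \<le> infdist (b k) P)"
    have kP: "k1 \<le> k" "d/3 \<le> infdist (b k) P"
      using LeastI[of "\<lambda>k. k1 \<le> k \<and> d/3 \<le> infdist (b k) P" k2] k2(1) ik2 by (auto simp: k_def)
    have "k \<noteq> k1" using kP(2) ik1 by auto
    then obtain j where j: "k = Suc j" "k1 \<le> j" using kP(1) by (metis Suc_le_D le_Suc_eq le_antisym not_less_eq_eq)
    have "\<not> (k1 \<le> j \<and> d/3 \<le> infdist (b j) P)"
      using not_less_Least[of j "\<lambda>k. k1 \<le> k \<and> d/3 \<le> infdist (b k) P"] j by (simp add: k_def)
    then have ij: "infdist (b j) P < d/3" using j by auto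
    have "j \<ge> n0" using j k1 by (simp add: m_def)
    then have "dist (b k) (b j) < d/3" using n0 j by simp
    then have "infdist (b k) P < 2*d/3" using infdist_triangle[of "b k" P "b j"] ij by linarith
    then have "d/3 \<le> infdist (b k) Q" using sumd[of "b k"] by linarith
    then have "b k \<in> S" using kP by (simp add: S_def)
    moreover have "k \<ge> n" using kP k1 by (simp add: m_def)
    ultimately show ?thesis by blast
  qed
  from limit_point_in_closed[OF bnd clS] freq obtain z where z: "z \<in> S" "z \<in> L"
    by (auto simp: L_def)
  then have "z \<in> P \<or> z \<in> Q" using E(3) by (auto simp: P_def Q_def)
  then show False using z(1) d(1) by (auto simp: S_def)
qed




lemma borel_measurable_infdist[measurable]:
  fixes f :: "'p \<Rightarrow> 'a::euclidean_space"
  assumes [measurable]: "f \<in> borel_measurable M"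
  shows "(\<lambda>\<omega>. infdist (f \<omega>) S) \<in> borel_measurable M"
  by (intro borel_measurable_continuous_on[where f="\<lambda>x. infdist x S"] continuous_on_infdist
      continuous_on_id assms)

locale lloyd = prob_space M for M :: "'p measure" +
  fixes X :: "'p \<Rightarrow> 'a::euclidean_space" and A :: "'a set"
  assumes Xm[measurable]: "X \<in> borel_measurable M"
  and X2: "integrable M (\<lambda>\<omega>. (norm (X \<omega>))\<^sup>2)"
  and hyp: "\<And>u c. u \<noteq> 0 \<Longrightarrow> measure M {\<omega>\<in>space M. X \<omega> \<bullet> u = c} = 0"
  and Afin: "finite A" and Ane: "A \<noteq> {}"
begin

definition "Fd \<omega> = (infdist (X \<omega>) A)\<^sup>2"
definition "Dq x = (\<integral>\<omega>. (infdist (X \<omega>) (A \<union> {x}))\<^sup>2 \<partial>M)"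
definition "DA = (\<integral>\<omega>. Fd \<omega> \<partial>M)"
definition "cellS x = {\<omega>\<in>space M. X \<omega> \<in> voronoi_cell A x}"
definition "Rset x = {\<omega>\<in>space M. dist (X \<omega>) x < infdist (X \<omega>) A}"
definition "pc x = measure M (cellS x)"
definition "Tl x = cond_mean M X (voronoi_cell A x)"

lemma infdist_ins: "infdist \<xi> (A \<union> {x}) = min (infdist \<xi> A) (dist \<xi> x)"
  using infdist_Un_min[OF Ane, of "{x}"] by simp

lemma Fd_meas[measurable]: "Fd \<in> borel_measurable M"
  unfolding Fd_def by measurable

lemma cellS_eq: "cellS x = {\<omega>\<in>space M. dist (X \<omega>) x \<le> infdist (X \<omega>) A}"
  by (auto simp: cellS_def voronoi_cell_def)

lemma cellS_sets[measurable]: "cellS x \<in> sets M"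
  unfolding cellS_eq by measurable

lemma Rset_sets[measurable]: "Rset x \<in> sets M"
  unfolding Rset_def by measurable

lemma Rset_sub: "Rset x \<subseteq> cellS x"
  by (auto simp: Rset_def cellS_eq)

lemma intB:
  fixes g :: "'p \<Rightarrow> 'b::{banach, second_countable_topology}"
  assumes "g \<in> borel_measurable M" "\<And>\<omega>. \<omega> \<in> space M \<Longrightarrow> norm (g \<omega>) \<le> C * (norm (X \<omega>))\<^sup>2 + K"
  shows "integrable M g"
proof (rule Bochner_Integration.integrable_bound[where f="\<lambda>\<omega>. C * (norm (X \<omega>))\<^sup>2 + K"])
  show "integrable M (\<lambda>\<omega>. C * (norm (X \<omega>))\<^sup>2 + K)"
    using X2 by (intro Bochner_Integration.integrable_add Bochner_Integration.integrable_mult_right) auto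
  show "AE \<omega> in M. norm (g \<omega>) \<le> norm (C * (norm (X \<omega>))\<^sup>2 + K)"
    using assms(2) by (intro AE_I2) (auto intro: order_trans[OF _ abs_ge_self])
qed (use assms in auto)

lemma a0: obtains a0 where "a0 \<in> A" using Ane by blast

lemma Fd_bound: "Fd \<omega> \<le> 2 * (norm (X \<omega>))\<^sup>2 + 2 * (norm a0)\<^sup>2" if "a0 \<in> A"
proof -
  have "infdist (X \<omega>) A \<le> norm (X \<omega>) + norm a0"
    using infdist_le[OF that, of "X \<omega>"] by (metis dist_norm norm_triangle_ineq4 order_trans)
  then have "(infdist (X \<omega>) A)\<^sup>2 \<le> (norm (X \<omega>) + norm a0)\<^sup>2"
    by (simp add: infdist_nonneg power_mono)
  also have "\<dots> \<le> 2 * (norm (X \<omega>))\<^sup>2 + 2 * (norm a0)\<^sup>2"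
  proof -
    have "0 \<le> (norm (X \<omega>) - norm a0)\<^sup>2" by simp
    then show ?thesis by (simp add: power2_eq_square algebra_simps)
  qed
  finally show ?thesis by (simp add: Fd_def)
qed

lemma Fd_nonneg: "0 \<le> Fd \<omega>" by (simp add: Fd_def)

lemma int_Fd: "integrable M Fd"
proof -
  obtain a0 where "a0 \<in> A" using a0 by blast
  show ?thesis by (rule intB[where C=2 and K="2 * (norm a0)\<^sup>2"]) (use Fd_bound[OF \<open>a0 \<in> A\<close>] Fd_nonneg in auto)
qed

lemma G_le: "(infdist \<xi> (A \<union> {x}))\<^sup>2 \<le> (infdist \<xi> A)\<^sup>2"
  unfolding infdist_ins by (simp add: infdist_nonneg power_mono)

lemma int_G: "integrable M (\<lambda>\<omega>. (infdist (X \<omega>) (A \<union> {x}))\<^sup>2)"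
proof -
  obtain a0 where "a0 \<in> A" using a0 by blast
  show ?thesis
    by (rule intB[where C=2 and K="2 * (norm a0)\<^sup>2"])
       (use Fd_bound[OF \<open>a0 \<in> A\<close>] G_le in \<open>auto simp: Fd_def intro: order_trans\<close>)
qed

lemma le_sq1: "0 \<le> (t::real) \<Longrightarrow> t \<le> 1 * t\<^sup>2 + 1"
proof -
  assume "0 \<le> t"
  have "0 \<le> (t - 1)\<^sup>2" by simp
  then have "2 * t \<le> t * t + 1" by (simp add: power2_eq_square algebra_simps)
  then show ?thesis using \<open>0 \<le> t\<close> by (simp add: power2_eq_square)
qed

lemma int_X: "integrable M X"
  by (rule intB[where C=1 and K=1]) (use le_sq1 in auto)

lemma int_indX: "S \<in> sets M \<Longrightarrow> integrable M (\<lambda>\<omega>. indicator S \<omega> *\<^sub>R X \<omega>)"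
  by (rule integrable_mult_indicator) (auto simp: int_X)

lemma abs_cont:
  assumes "\<delta> > 0"
  shows "\<exists>K>0. \<forall>S\<in>sets M. (\<integral>\<omega>. indicator S \<omega> * Fd \<omega> \<partial>M) \<le> K * measure M S + \<delta>"
proof -
  define s where "s n \<omega> = max 0 (Fd \<omega> - real n)" for n \<omega>
  have "(\<lambda>n. \<integral>\<omega>. s n \<omega> \<partial>M) \<longlonglongrightarrow> (\<integral>\<omega>. 0 \<partial>M)"
  proof (rule integral_dominated_convergence[where w=Fd])
    show "AE \<omega> in M. (\<lambda>n. s n \<omega>) \<longlonglongrightarrow> 0"
    proof (intro AE_I2 tendsto_eventually)
      fix \<omega>
      obtain n0 :: nat where "Fd \<omega> \<le> n0" using real_arch_simple by blast
      then show "\<forall>\<^sub>F n in sequentially. s n \<omega> = 0"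
        unfolding eventually_sequentially s_def
        by (intro exI[of _ n0]) (auto intro!: max_absorb1 simp: order_trans)
    qed
    show "AE \<omega> in M. norm (s n \<omega>) \<le> Fd \<omega>" for n
      by (intro AE_I2) (auto simp: s_def Fd_nonneg)
  qed (auto simp: s_def int_Fd)
  then obtain n where n: "(\<integral>\<omega>. s n \<omega> \<partial>M) < \<delta>"
    using assms unfolding lim_sequentially by (metis dist_real_def abs_less_iff integral_zero diff_0_right order_refl)
  have [measurable]: "s n \<in> borel_measurable M" unfolding s_def by measurable
  have int_s: "integrable M (s n)"
    by (rule Bochner_Integration.integrable_bound[OF int_Fd]) (auto simp: s_def Fd_nonneg)
  show ?thesis
  proof (intro exI[of _ "real n + 1"] conjI ballI)
    fix S assume S[measurable]: "S \<in> sets M"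
    have "(\<integral>\<omega>. indicator S \<omega> * Fd \<omega> \<partial>M) \<le> (\<integral>\<omega>. (real n + 1) * indicator S \<omega> + s n \<omega> \<partial>M)"
    proof (rule integral_mono)
      show "integrable M (\<lambda>\<omega>. indicator S \<omega> * Fd \<omega>)"
        using integrable_real_mult_indicator[OF S int_Fd] by (simp add: mult.commute)
      show "integrable M (\<lambda>\<omega>. (real n + 1) * indicator S \<omega> + s n \<omega>)"
        using int_s by (intro Bochner_Integration.integrable_add Bochner_Integration.integrable_mult_right) (auto simp: S integrable_indicator_iff Int_absorb2 sets.sets_into_space emeasure_finite less_top[symmetric])
      fix \<omega> show "indicator S \<omega> * Fd \<omega> \<le> (real n + 1) * indicator S \<omega> + s n \<omega>"
        by (auto simp: indicator_def s_def Fd_nonneg)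
    qed
    also have "\<dots> = (real n + 1) * measure M S + (\<integral>\<omega>. s n \<omega> \<partial>M)"
      using int_s S by (subst Bochner_Integration.integral_add) (auto simp: S integrable_indicator_iff Int_absorb2 sets.sets_into_space emeasure_finite less_top[symmetric])
    finally show "(\<integral>\<omega>. indicator S \<omega> * Fd \<omega> \<partial>M) \<le> (real n + 1) * measure M S + \<delta>"
      using n by linarith
  qed simp
qed

end


context lloyd begin

lemma infdist_ins2: "infdist \<xi> (insert x A) = min (infdist \<xi> A) (dist \<xi> x)"
  using infdist_ins[of \<xi> x] by simp

lemma int_G2: "integrable M (\<lambda>\<omega>. (infdist (X \<omega>) (insert x A))\<^sup>2)"
  using int_G[of x] by simp

lemma gap: "DA - Dq x \<le> (\<integral>\<omega>. indicator (Rset x) \<omega> * Fd \<omega> \<partial>M)"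
proof -
  have "DA - Dq x = (\<integral>\<omega>. Fd \<omega> - (infdist (X \<omega>) (A \<union> {x}))\<^sup>2 \<partial>M)"
    unfolding DA_def Dq_def by (rule Bochner_Integration.integral_diff[symmetric]) (auto simp: int_Fd int_G int_G2)
  also have "\<dots> \<le> (\<integral>\<omega>. indicator (Rset x) \<omega> * Fd \<omega> \<partial>M)"
  proof (rule integral_mono)
    show "integrable M (\<lambda>\<omega>. Fd \<omega> - (infdist (X \<omega>) (A \<union> {x}))\<^sup>2)"
      by (auto simp: int_Fd int_G int_G2)
    show "integrable M (\<lambda>\<omega>. indicator (Rset x) \<omega> * Fd \<omega>)"
      using integrable_real_mult_indicator[OF Rset_sets int_Fd] by (simp add: mult.commute)
    fix \<omega> assume "\<omega> \<in> space M"
    then show "Fd \<omega> - (infdist (X \<omega>) (A \<union> {x}))\<^sup>2 \<le> indicator (Rset x) \<omega> * Fd \<omega>"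
      by (auto simp: Rset_def indicator_def infdist_ins infdist_ins2 Fd_def min_def)
  qed
  finally show ?thesis .
qed

lemma markov: "R > 0 \<Longrightarrow> measure M {\<omega>\<in>space M. R\<^sup>2 \<le> (norm (X \<omega>))\<^sup>2} \<le> (\<integral>\<omega>. (norm (X \<omega>))\<^sup>2 \<partial>M) / R\<^sup>2"
  by (rule integral_Markov_inequality_measure[OF X2, where A="space M"]) auto

lemma main_est:
  assumes "c0 < DA"
  shows "\<exists>\<eta>>0. \<exists>Rb. \<forall>x. Dq x \<le> c0 \<longrightarrow> \<eta> \<le> measure M (Rset x) \<and> norm x \<le> Rb"
proof -
  define \<delta> where "\<delta> = DA - c0"
  have \<delta>: "\<delta> > 0" using assms by (simp add: \<delta>_def)
  obtain K where K: "K > 0" "\<And>S. S \<in> sets M \<Longrightarrow> (\<integral>\<omega>. indicator S \<omega> * Fd \<omega> \<partial>M) \<le> K * measure M S + \<delta>/2"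
    using abs_cont[of "\<delta>/2"] \<delta> by auto
  define \<eta> where "\<eta> = \<delta> / (2*K)"
  have \<eta>: "\<eta> > 0" using \<delta> K by (simp add: \<eta>_def)
  have meas: "\<eta> \<le> measure M (Rset x)" if "Dq x \<le> c0" for x
  proof -
    have "\<delta> \<le> DA - Dq x" using that by (simp add: \<delta>_def)
    also have "\<dots> \<le> K * measure M (Rset x) + \<delta>/2" using gap[of x] K(2)[OF Rset_sets[of x]] by linarith
    finally have "\<delta> \<le> measure M (Rset x) * (2*K)" by (simp add: algebra_simps)
    then show ?thesis using K(1) by (simp add: \<eta>_def pos_divide_le_eq)
  qed
  define E where "E = (\<integral>\<omega>. (norm (X \<omega>))\<^sup>2 \<partial>M)"
  have E0: "E \<ge> 0" unfolding E_def by simp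
  define R where "R = sqrt (E / \<eta>) + 1"
  have sq0: "0 \<le> sqrt (E/\<eta>)" using E0 \<eta> by simp
  then have R0: "R > 0" unfolding R_def by linarith
  have "sqrt (E/\<eta>) < R" by (simp add: R_def)
  then have "(sqrt (E/\<eta>))\<^sup>2 < R\<^sup>2" using sq0 by (rule power_strict_mono) simp
  then have "E/\<eta> < R\<^sup>2" using E0 \<eta> by simp
  then have ER: "E / R\<^sup>2 < \<eta>" using \<eta> R0 by (simp add: field_simps)
  obtain a0 where a0: "a0 \<in> A" using a0 by blast
  define Rb where "Rb = 2*R + norm a0"
  have bnd: "norm x \<le> Rb" if "Dq x \<le> c0" for x
  proof (rule ccontr)
    assume "\<not> norm x \<le> Rb"
    then have nx: "norm x > 2*R + norm a0" by (simp add: Rb_def)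
    have sub: "Rset x \<subseteq> {\<omega>\<in>space M. R\<^sup>2 \<le> (norm (X \<omega>))\<^sup>2}"
    proof
      fix \<omega> assume "\<omega> \<in> Rset x"
      then have \<omega>: "\<omega> \<in> space M" "dist (X \<omega>) x < infdist (X \<omega>) A" by (auto simp: Rset_def)
      have "infdist (X \<omega>) A \<le> norm (X \<omega>) + norm a0"
        using infdist_le[OF a0, of "X \<omega>"] norm_triangle_ineq4[of "X \<omega>" a0] by (simp add: dist_norm)
      moreover have "norm x \<le> norm (X \<omega>) + norm (x - X \<omega>)" by (rule norm_triangle_sub)
      then have "norm x \<le> norm (X \<omega>) + dist (X \<omega>) x" by (simp add: dist_norm norm_minus_commute)
      ultimately have "R < norm (X \<omega>)" using \<omega>(2) nx by linarith
      then have "R\<^sup>2 \<le> (norm (X \<omega>))\<^sup>2" by (intro power_mono) (use R0 in auto)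
      with \<omega> show "\<omega> \<in> {\<omega>\<in>space M. R\<^sup>2 \<le> (norm (X \<omega>))\<^sup>2}" by simp
    qed
    have "measure M (Rset x) \<le> measure M {\<omega>\<in>space M. R\<^sup>2 \<le> (norm (X \<omega>))\<^sup>2}"
      by (rule finite_measure_mono[OF sub]) measurable
    also have "\<dots> \<le> E / R\<^sup>2" using markov[OF R0] by (simp add: E_def)
    finally show False using meas[OF that] ER by linarith
  qed
  show ?thesis using \<eta> meas bnd by blast
qed

lemma strict:
  assumes "b0 \<in> distr_support M X" "b0 \<notin> A"
  shows "Dq b0 < DA"
proof -
  have clA: "closed A" using Afin by (simp add: finite_imp_closed)
  define r where "r = infdist b0 A"
  have r: "r > 0" using infdist_pos_not_in_closed[OF clA Ane assms(2)] by (simp add: r_def)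
  define B where "B = {\<omega>\<in>space M. dist b0 (X \<omega>) < r/3}"
  have B[measurable]: "B \<in> sets M" unfolding B_def by measurable
  have "\<forall>e>0. measure M {\<omega>\<in>space M. X \<omega> \<in> ball b0 e} > 0"
    using assms(1) unfolding distr_support_def by blast
  moreover have r3: "r/3 > 0" using r by simp
  ultimately have "measure M {\<omega>\<in>space M. X \<omega> \<in> ball b0 (r/3)} > 0" by blast
  moreover have "{\<omega>\<in>space M. X \<omega> \<in> ball b0 (r/3)} = B" by (auto simp: B_def mem_ball)
  ultimately have "measure M B > 0" by simp
  then have eB: "emeasure M B \<noteq> 0" by (simp add: emeasure_eq_measure)
  show ?thesis unfolding Dq_def DA_def
  proof (rule integral_less_AE[OF int_G int_Fd eB B])
    show "AE \<omega> in M. \<omega> \<in> B \<longrightarrow> (infdist (X \<omega>) (A \<union> {b0}))\<^sup>2 \<noteq> Fd \<omega>"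
    proof (intro AE_I2 impI)
      fix \<omega> assume "\<omega> \<in> B"
      then have d: "dist (X \<omega>) b0 < r/3" by (simp add: B_def dist_commute)
      have "r \<le> infdist (X \<omega>) A + dist b0 (X \<omega>)" using infdist_triangle[of b0 A "X \<omega>"] by (simp add: r_def)
      moreover have "dist b0 (X \<omega>) < r/3" using d by (simp add: dist_commute)
      ultimately have "dist b0 (X \<omega>) < infdist (X \<omega>) A" using zero_le_dist[of b0 "X \<omega>"] by linarith
      then have i: "dist (X \<omega>) b0 < infdist (X \<omega>) A" by (simp add: dist_commute)
      then have "(dist (X \<omega>) b0)\<^sup>2 < (infdist (X \<omega>) A)\<^sup>2" by (intro power_strict_mono) auto
      then show "(infdist (X \<omega>) (A \<union> {b0}))\<^sup>2 \<noteq> Fd \<omega>" using i unfolding infdist_ins Fd_def by (simp add: min_def)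
    qed
    show "AE \<omega> in M. (infdist (X \<omega>) (A \<union> {b0}))\<^sup>2 \<le> Fd \<omega>"
      by (intro AE_I2) (unfold Fd_def, rule G_le)
  qed
qed

end


context lloyd begin

definition "Ic y = (\<integral>\<omega>. indicator (cellS y) \<omega> *\<^sub>R X \<omega> \<partial>M)"

lemma Tl_eq: "Tl y = (1 / pc y) *\<^sub>R Ic y"
  unfolding Tl_def cond_mean_def pc_def Ic_def cellS_def by simp

lemma pc_int: "pc y = (\<integral>\<omega>. indicator (cellS y) \<omega> \<partial>M)"
  unfolding pc_def using sets.sets_into_space[OF cellS_sets[of y]] by (simp add: Int_absorb2)

lemma int_ind: "integrable M (indicator (cellS y) :: 'p \<Rightarrow> real)"
  by (rule integrable_real_indicator) (auto simp: emeasure_finite less_top[symmetric])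

lemma sq_identity:
  fixes z x c :: 'a
  shows "(dist z x)\<^sup>2 = (dist z c)\<^sup>2 + 2 * ((z - c) \<bullet> (c - x)) + (norm (c - x))\<^sup>2"
proof -
  have "z - x = (z - c) + (c - x)" by simp
  then have "(norm (z - x))\<^sup>2 = (norm ((z - c) + (c - x)))\<^sup>2" by simp
  also have "\<dots> = (norm (z - c))\<^sup>2 + 2 * ((z - c) \<bullet> (c - x)) + (norm (c - x))\<^sup>2"
    using dot_norm[of "z - c" "c - x"] by (simp add: field_simps)
  finally show ?thesis by (simp add: dist_norm)
qed

lemma decrease:
  assumes pos: "pc x > 0"
  shows "Dq (Tl x) + pc x * (norm (Tl x - x))\<^sup>2 \<le> Dq x"
proof -
  define S where "S = cellS x"
  define c where "c = Tl x"
  define v where "v = c - x"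
  have S[measurable]: "S \<in> sets M" by (simp add: S_def)
  have Ic: "Ic x = pc x *\<^sub>R c" using pos by (simp add: c_def Tl_eq)
  define L where "L \<omega> = indicator S \<omega> * (norm v)\<^sup>2 + 2 * ((indicator S \<omega> *\<^sub>R X \<omega>) \<bullet> v) - 2 * (indicator S \<omega> * (c \<bullet> v))" for \<omega>
  have intS: "integrable M (indicator S :: 'p \<Rightarrow> real)" unfolding S_def by (rule int_ind)
  have intSX: "integrable M (\<lambda>\<omega>. indicator S \<omega> *\<^sub>R X \<omega>)" by (rule int_indX[OF S])
  have i1: "integrable M (\<lambda>\<omega>. indicator S \<omega> * (norm v)\<^sup>2)"
    using intS by (rule Bochner_Integration.integrable_mult_left)
  have i2: "integrable M (\<lambda>\<omega>. 2 * ((indicator S \<omega> *\<^sub>R X \<omega>) \<bullet> v))"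
    using intSX by (intro Bochner_Integration.integrable_mult_right integrable_inner_left)
  have i3: "integrable M (\<lambda>\<omega>. 2 * (indicator S \<omega> * (c \<bullet> v)))"
    using intS by (intro Bochner_Integration.integrable_mult_right Bochner_Integration.integrable_mult_left)
  have pcS: "(\<integral>\<omega>. indicator S \<omega> \<partial>M) = pc x" by (simp add: S_def pc_int)
  have eqL1: "(\<integral>\<omega>. L \<omega> \<partial>M) = (\<integral>\<omega>. indicator S \<omega> * (norm v)\<^sup>2 \<partial>M) + (\<integral>\<omega>. 2 * ((indicator S \<omega> *\<^sub>R X \<omega>) \<bullet> v) \<partial>M)
      - (\<integral>\<omega>. 2 * (indicator S \<omega> * (c \<bullet> v)) \<partial>M)"
    unfolding L_def using i1 i2 i3
    by (simp add: Bochner_Integration.integral_diff Bochner_Integration.integral_add)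
  have e2: "(\<integral>\<omega>. (indicator S \<omega> *\<^sub>R X \<omega>) \<bullet> v \<partial>M) = Ic x \<bullet> v"
    using intSX unfolding Ic_def S_def by (intro integral_inner_left) auto
  have eqL2: "(\<integral>\<omega>. indicator S \<omega> * (norm v)\<^sup>2 \<partial>M) + (\<integral>\<omega>. 2 * ((indicator S \<omega> *\<^sub>R X \<omega>) \<bullet> v) \<partial>M)
      - (\<integral>\<omega>. 2 * (indicator S \<omega> * (c \<bullet> v)) \<partial>M) = pc x * (norm v)\<^sup>2 + 2 * (Ic x \<bullet> v) - 2 * (pc x * (c \<bullet> v))"
    using pcS e2 by simp
  have IL: "(\<integral>\<omega>. L \<omega> \<partial>M) = pc x * (norm v)\<^sup>2"
    using eqL1 eqL2 by (simp add: Ic)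
  have "(\<integral>\<omega>. L \<omega> \<partial>M) \<le> (\<integral>\<omega>. (infdist (X \<omega>) (A \<union> {x}))\<^sup>2 - (infdist (X \<omega>) (A \<union> {c}))\<^sup>2 \<partial>M)"
  proof (rule integral_mono)
    show "integrable M L" unfolding L_def using i1 i2 i3 by simp
    show "integrable M (\<lambda>\<omega>. (infdist (X \<omega>) (A \<union> {x}))\<^sup>2 - (infdist (X \<omega>) (A \<union> {c}))\<^sup>2)"
      using int_G[of x] int_G[of c] by simp
    fix \<omega> assume "\<omega> \<in> space M"
    show "L \<omega> \<le> (infdist (X \<omega>) (A \<union> {x}))\<^sup>2 - (infdist (X \<omega>) (A \<union> {c}))\<^sup>2"
    proof (cases "\<omega> \<in> S")
      case True
      then have le: "dist (X \<omega>) x \<le> infdist (X \<omega>) A" by (simp add: S_def cellS_eq)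
      have "L \<omega> = (norm v)\<^sup>2 + 2 * ((X \<omega> - c) \<bullet> v)" using True
        by (simp add: L_def inner_diff_left)
      also have "\<dots> = (dist (X \<omega>) x)\<^sup>2 - (dist (X \<omega>) c)\<^sup>2"
        using sq_identity[of "X \<omega>" x c] by (simp add: v_def)
      also have "\<dots> \<le> (infdist (X \<omega>) (A \<union> {x}))\<^sup>2 - (infdist (X \<omega>) (A \<union> {c}))\<^sup>2"
      proof -
        have e: "infdist (X \<omega>) (A \<union> {x}) = dist (X \<omega>) x" using le by (simp add: infdist_ins2 min_def)
        have "infdist (X \<omega>) (A \<union> {c}) \<le> dist (X \<omega>) c" by (simp add: infdist_ins2)
        then have "(infdist (X \<omega>) (A \<union> {c}))\<^sup>2 \<le> (dist (X \<omega>) c)\<^sup>2"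
          by (intro power_mono) (auto simp: infdist_nonneg)
        then show ?thesis unfolding e by linarith
      qed
      finally show ?thesis .
    next
      case False
      then have gt: "infdist (X \<omega>) A < dist (X \<omega>) x" using \<open>\<omega> \<in> space M\<close> by (auto simp: S_def cellS_eq)
      have "L \<omega> = 0" using False by (simp add: L_def)
      also have "0 \<le> (infdist (X \<omega>) (A \<union> {x}))\<^sup>2 - (infdist (X \<omega>) (A \<union> {c}))\<^sup>2"
      proof -
        have e: "infdist (X \<omega>) (A \<union> {x}) = infdist (X \<omega>) A" using gt by (simp add: infdist_ins2 min_def)
        show ?thesis unfolding e using G_le[of "X \<omega>" c] by linarith
      qed
      finally show ?thesis .
    qed
  qed
  also have "\<dots> = Dq x - Dq c"
    unfolding Dq_def using int_G[of x] int_G[of c] by (simp add: Bochner_Integration.integral_diff)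
  finally show ?thesis using IL by (simp add: c_def v_def)
qed

end


context lloyd begin

lemma Dq_cont:
  assumes "xs \<longlonglongrightarrow> x"
  shows "(\<lambda>n. Dq (xs n)) \<longlonglongrightarrow> Dq x"
  unfolding Dq_def
proof (rule integral_dominated_convergence[where w=Fd])
  show "AE \<omega> in M. (\<lambda>n. (infdist (X \<omega>) (A \<union> {xs n}))\<^sup>2) \<longlonglongrightarrow> (infdist (X \<omega>) (A \<union> {x}))\<^sup>2"
    unfolding infdist_ins by (intro AE_I2 tendsto_intros assms)
  show "AE \<omega> in M. norm ((infdist (X \<omega>) (A \<union> {xs n}))\<^sup>2) \<le> Fd \<omega>" for n
    by (intro AE_I2) (simp add: Fd_def G_le del: Un_insert_right)
qed (auto simp: int_Fd)

lemma AE_not_bisector: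
  assumes "x \<notin> A"
  shows "AE \<omega> in M. \<forall>a\<in>A. dist (X \<omega>) x \<noteq> dist (X \<omega>) a"
proof (rule AE_finite_allI[OF Afin])
  fix a assume "a \<in> A"
  define u where "u = a - x"
  define k where "k = (a \<bullet> a - x \<bullet> x) / 2"
  have u: "u \<noteq> 0" using assms \<open>a \<in> A\<close> by (auto simp: u_def)
  define N where "N = {\<omega>\<in>space M. X \<omega> \<bullet> u = k}"
  have N[measurable]: "N \<in> sets M" unfolding N_def by measurable
  have "measure M N = 0" unfolding N_def by (rule hyp[OF u])
  then have null: "N \<in> null_sets M" using N by (simp add: null_setsI emeasure_eq_measure)
  have sub: "{\<omega> \<in> space M. \<not> (dist (X \<omega>) x \<noteq> dist (X \<omega>) a)} \<subseteq> N"
    proof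
      fix \<omega> assume "\<omega> \<in> {\<omega> \<in> space M. \<not> (dist (X \<omega>) x \<noteq> dist (X \<omega>) a)}"
      then have \<omega>: "\<omega> \<in> space M" "dist (X \<omega>) x = dist (X \<omega>) a" by auto
      then have "(dist (X \<omega>) x)\<^sup>2 = (dist (X \<omega>) a)\<^sup>2" by simp
      then have "(X \<omega> - x) \<bullet> (X \<omega> - x) = (X \<omega> - a) \<bullet> (X \<omega> - a)"
        by (simp add: dist_norm power2_norm_eq_inner)
      then have "X \<omega> \<bullet> u = k"
        by (simp add: u_def k_def inner_diff_left inner_diff_right inner_commute algebra_simps)
      with \<omega> show "\<omega> \<in> N" by (simp add: N_def)
    qed
  show "AE \<omega> in M. dist (X \<omega>) x \<noteq> dist (X \<omega>) a"
    by (rule AE_I'[OF null sub])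
qed

lemma ind_conv:
  assumes "xs \<longlonglongrightarrow> x" "\<omega> \<in> space M" "\<forall>a\<in>A. dist (X \<omega>) x \<noteq> dist (X \<omega>) a"
  shows "(\<lambda>n. indicator (cellS (xs n)) \<omega> :: real) \<longlonglongrightarrow> indicator (cellS x) \<omega>"
proof -
  have clA: "closed A" using Afin by (simp add: finite_imp_closed)
  obtain a where a: "a \<in> A" "infdist (X \<omega>) A = dist (X \<omega>) a"
    using infdist_attains_inf[OF clA Ane] by blast
  have ne: "dist (X \<omega>) x \<noteq> infdist (X \<omega>) A" using a assms(3) by auto
  have t: "(\<lambda>n. dist (X \<omega>) (xs n)) \<longlonglongrightarrow> dist (X \<omega>) x" by (intro tendsto_intros assms(1))
  show ?thesis
  proof (cases "dist (X \<omega>) x < infdist (X \<omega>) A")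
    case True
    have "eventually (\<lambda>n. dist (X \<omega>) (xs n) < infdist (X \<omega>) A) sequentially"
      by (rule order_tendstoD(2)[OF t True])
    then have "eventually (\<lambda>n. indicator (cellS (xs n)) \<omega> = (indicator (cellS x) \<omega> :: real)) sequentially"
      by eventually_elim (use True assms(2) in \<open>auto simp: cellS_eq indicator_def\<close>)
    then show ?thesis by (rule tendsto_eventually)
  next
    case False
    then have F: "infdist (X \<omega>) A < dist (X \<omega>) x" using ne by auto
    have "eventually (\<lambda>n. infdist (X \<omega>) A < dist (X \<omega>) (xs n)) sequentially"
      by (rule order_tendstoD(1)[OF t F])
    then have "eventually (\<lambda>n. indicator (cellS (xs n)) \<omega> = (indicator (cellS x) \<omega> :: real)) sequentially"
      by eventually_elim (use F assms(2) in \<open>auto simp: cellS_eq indicator_def\<close>)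
    then show ?thesis by (rule tendsto_eventually)
  qed
qed

lemma Tl_cont:
  assumes "x \<notin> A" "pc x > 0" "xs \<longlonglongrightarrow> x"
  shows "(\<lambda>n. Tl (xs n)) \<longlonglongrightarrow> Tl x"
proof -
  have AEc: "AE \<omega> in M. (\<lambda>n. indicator (cellS (xs n)) \<omega> :: real) \<longlonglongrightarrow> indicator (cellS x) \<omega>"
    using AE_not_bisector[OF assms(1)] AE_space by eventually_elim (auto intro: ind_conv[OF assms(3)])
  have p: "(\<lambda>n. pc (xs n)) \<longlonglongrightarrow> pc x"
    unfolding pc_int
  proof (rule integral_dominated_convergence[where w="\<lambda>_. 1"])
    show "AE \<omega> in M. norm (indicator (cellS (xs n)) \<omega> :: real) \<le> 1" for n
      by (intro AE_I2) (simp add: indicator_def)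
  qed (use AEc in auto)
  have I: "(\<lambda>n. Ic (xs n)) \<longlonglongrightarrow> Ic x"
    unfolding Ic_def
  proof (rule integral_dominated_convergence[where w="\<lambda>\<omega>. norm (X \<omega>)"])
    show "AE \<omega> in M. (\<lambda>n. indicator (cellS (xs n)) \<omega> *\<^sub>R X \<omega>) \<longlonglongrightarrow> indicator (cellS x) \<omega> *\<^sub>R X \<omega>"
      using AEc by eventually_elim (intro tendsto_intros)
    show "AE \<omega> in M. norm (indicator (cellS (xs n)) \<omega> *\<^sub>R X \<omega>) \<le> norm (X \<omega>)" for n
      by (intro AE_I2) (simp add: indicator_def)
  qed (auto simp: int_X)
  have "(\<lambda>n. (1 / pc (xs n)) *\<^sub>R Ic (xs n)) \<longlonglongrightarrow> (1 / pc x) *\<^sub>R Ic x"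
    using assms(2) by (intro tendsto_intros p I) auto
  then show ?thesis by (simp add: Tl_eq)
qed

end



theorem proposition6p2:
  fixes M :: "'p measure" and X :: "'p \<Rightarrow> 'a::euclidean_space"
    and a :: "nat \<Rightarrow> 'a" and b :: "nat \<Rightarrow> 'a" and N :: nat
  assumes "DIM('a) \<ge> 2"
    and "prob_space M"
    and "X \<in> borel_measurable M"
    and "integrable M (\<lambda>\<omega>. (norm (X \<omega>))\<^sup>2)"
    and "\<And>u c. u \<noteq> 0 \<Longrightarrow> measure M {\<omega>\<in>space M. X \<omega> \<bullet> u = c} = 0"
    and "convex (distr_support M X)"
    and "greedy_quant_seq M X a"
    and "N \<ge> 2"
    and "b 0 \<in> distr_support M X - a ` {1..N-1}"
    and "\<And>n. b (Suc n) = cond_mean M X (voronoi_cell (a ` {1..N-1}) (b n))"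
  shows "bounded (range b) \<and>
    (\<exists>l. quant_err2 M X (a ` {1..N}) \<le> l \<and> l \<le> quant_err2 M X (a ` {1..N-1} \<union> {b 0}) \<and>
      (let \<Lambda> = {x. quant_err2 M X (a ` {1..N-1} \<union> {x}) = l \<and>
                     x = cond_mean M X (voronoi_cell (a ` {1..N-1}) x)} in
        connected (limit_points b) \<and> compact (limit_points b) \<and> limit_points b \<subseteq> \<Lambda> \<and>
        (\<lambda>n. quant_err2 M X (a ` {1..N-1} \<union> {b n})) \<longlonglongrightarrow> l \<and>
        ((\<forall>K. compact K \<longrightarrow> finite (\<Lambda> \<inter> K)) \<longrightarrow> (\<exists>x\<in>\<Lambda>. b \<longlonglongrightarrow> x))))"
proof -
  define A where "A = a ` {1..N-1}"
  have Afin: "finite A" by (simp add: A_def)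
  have Ane: "A \<noteq> {}" using assms(8) by (auto simp: A_def)
  interpret prob_space M by (rule assms(2))
  interpret lloyd M X A
    by unfold_locales (use assms(3,4,5) Afin Ane in auto)
  have bS: "b (Suc n) = Tl (b n)" for n unfolding Tl_def unfolding A_def by (rule assms(10))
  have b0: "b 0 \<in> distr_support M X" "b 0 \<notin> A" using assms(9) by (auto simp: A_def)
  define c0 where "c0 = Dq (b 0)"
  have c0: "c0 < DA" using strict[OF b0] by (simp add: c0_def)
  obtain \<eta> Rb where \<eta>: "\<eta> > 0" and est: "\<And>x. Dq x \<le> c0 \<Longrightarrow> \<eta> \<le> measure M (Rset x) \<and> norm x \<le> Rb"
    using main_est[OF c0] by blast
  have pcge: "\<eta> \<le> pc x" if "Dq x \<le> c0" for x
  proof -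
    have "measure M (Rset x) \<le> pc x" unfolding pc_def by (rule finite_measure_mono[OF Rset_sub]) simp
    then show ?thesis using est[OF that] by linarith
  qed
  have Dq0: "0 \<le> Dq x" for x unfolding Dq_def by simp
  have step1: "Dq (b (Suc n)) + \<eta> * (norm (b (Suc n) - b n))\<^sup>2 \<le> Dq (b n)" if "Dq (b n) \<le> c0" for n
  proof -
    have p: "\<eta> \<le> pc (b n)" by (rule pcge[OF that])
    then have "\<eta> * (norm (b (Suc n) - b n))\<^sup>2 \<le> pc (b n) * (norm (b (Suc n) - b n))\<^sup>2"
      by (intro mult_right_mono) auto
    moreover have "Dq (Tl (b n)) + pc (b n) * (norm (Tl (b n) - b n))\<^sup>2 \<le> Dq (b n)"
      using p \<eta> by (intro decrease) linarith
    ultimately show ?thesis by (simp add: bS)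
  qed
  have Dle: "Dq (b n) \<le> c0" for n
  proof (induction n)
    case 0 then show ?case by (simp add: c0_def)
  next
    case (Suc n)
    have "0 \<le> \<eta> * (norm (b (Suc n) - b n))\<^sup>2" using \<eta> by simp
    then show ?case using step1[OF Suc] Suc by linarith
  qed
  have step: "Dq (b (Suc n)) + \<eta> * (norm (b (Suc n) - b n))\<^sup>2 \<le> Dq (b n)" for n
    by (rule step1[OF Dle])
  have dec: "decseq (\<lambda>n. Dq (b n))"
  proof (rule decseq_SucI)
    fix n have "0 \<le> \<eta> * (norm (b (Suc n) - b n))\<^sup>2" using \<eta> by simp
    then show "Dq (b (Suc n)) \<le> Dq (b n)" using step[of n] by linarith
  qed
  obtain Lsq where Lsq: "(\<lambda>n. Dq (b n)) \<longlonglongrightarrow> Lsq" "\<forall>i. Lsq \<le> Dq (b i)"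
    using decseq_convergent[OF dec, of 0] Dq0 by blast
  define l where "l = sqrt Lsq"
  have qe: "quant_err2 M X (A \<union> {y}) = sqrt (Dq y)" for y by (simp add: quant_err2_def Dq_def)
  have bnd: "bounded (range b)"
    unfolding bounded_iff using est[OF Dle] by blast
  have conv: "(\<lambda>n. quant_err2 M X (A \<union> {b n})) \<longlonglongrightarrow> l"
    unfolding qe l_def by (intro tendsto_real_sqrt Lsq(1))
  have up: "l \<le> quant_err2 M X (A \<union> {b 0})"
    unfolding qe l_def using Lsq(2) by (simp add: real_sqrt_le_mono)
  have aN: "a ` {1..N} = A \<union> {a (Suc (N-1))}"
  proof -
    have "{1..N} = insert N {1..N-1}" using assms(8) by auto
    then show ?thesis using assms(8) by (auto simp: A_def)
  qed
  have greedy: "quant_err2 M X (a ` {1..N}) \<le> quant_err2 M X (A \<union> {b n})" for n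
    using assms(7) unfolding greedy_quant_seq_def aN A_def by blast
  have low: "quant_err2 M X (a ` {1..N}) \<le> l"
    by (rule LIMSEQ_le_const[OF conv]) (use greedy in blast)
  have dsq: "(\<lambda>n. Dq (b n) - Dq (b (Suc n))) \<longlonglongrightarrow> 0"
    using tendsto_diff[OF Lsq(1) LIMSEQ_Suc[OF Lsq(1)]] by simp
  have stepc: "(\<lambda>n. dist (b (Suc n)) (b n)) \<longlonglongrightarrow> 0"
  proof (rule tendsto_sandwich[where f="\<lambda>_. 0" and h="\<lambda>n. sqrt ((Dq (b n) - Dq (b (Suc n))) / \<eta>)"])
    show "\<forall>\<^sub>F n in sequentially. 0 \<le> dist (b (Suc n)) (b n)" by simp
    show "\<forall>\<^sub>F n in sequentially. dist (b (Suc n)) (b n) \<le> sqrt ((Dq (b n) - Dq (b (Suc n))) / \<eta>)"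
    proof (intro always_eventually allI)
      fix n
      have "(norm (b (Suc n) - b n))\<^sup>2 \<le> (Dq (b n) - Dq (b (Suc n))) / \<eta>"
        using step[of n] \<eta> by (simp add: pos_le_divide_eq mult.commute)
      then have "sqrt ((norm (b (Suc n) - b n))\<^sup>2) \<le> sqrt ((Dq (b n) - Dq (b (Suc n))) / \<eta>)"
        by (rule real_sqrt_le_mono)
      then show "dist (b (Suc n)) (b n) \<le> sqrt ((Dq (b n) - Dq (b (Suc n))) / \<eta>)"
        by (simp add: dist_norm)
    qed
    show "(\<lambda>n. sqrt ((Dq (b n) - Dq (b (Suc n))) / \<eta>)) \<longlonglongrightarrow> 0"
      using tendsto_real_sqrt[OF tendsto_divide[OF dsq tendsto_const[of \<eta>]]] \<eta> by simp
  qed simp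
  define \<Lambda> where "\<Lambda> = {x. quant_err2 M X (A \<union> {x}) = l \<and> x = cond_mean M X (voronoi_cell A x)}"
  have sub: "limit_points b \<subseteq> \<Lambda>"
  proof
    fix x assume "x \<in> limit_points b"
    then obtain r where r: "strict_mono r" "(b \<circ> r) \<longlonglongrightarrow> x" by (auto simp: limit_points_def)
    have "(\<lambda>n. Dq ((b \<circ> r) n)) \<longlonglongrightarrow> Dq x" by (rule Dq_cont[OF r(2)])
    moreover have "(\<lambda>n. Dq ((b \<circ> r) n)) \<longlonglongrightarrow> Lsq"
      using LIMSEQ_subseq_LIMSEQ[OF Lsq(1) r(1)] by (simp add: comp_def)
    ultimately have Dx: "Dq x = Lsq" by (rule LIMSEQ_unique)
    have Dxc: "Dq x \<le> c0" using Dx Lsq(2) by (simp add: c0_def)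
    have pcx: "pc x > 0" using pcge[OF Dxc] \<eta> by linarith
    have xA: "x \<notin> A"
    proof
      assume "x \<in> A"
      then have "Dq x = DA" by (simp add: Dq_def DA_def Fd_def insert_absorb)
      then show False using Dxc c0 by linarith
    qed
    have T1: "(\<lambda>n. Tl ((b \<circ> r) n)) \<longlonglongrightarrow> Tl x" by (rule Tl_cont[OF xA pcx r(2)])
    have d0: "(\<lambda>n. dist (b (Suc (r n))) (b (r n))) \<longlonglongrightarrow> 0"
      using LIMSEQ_subseq_LIMSEQ[OF stepc r(1)] by (simp add: comp_def)
    have "(\<lambda>n. b (Suc (r n))) \<longlonglongrightarrow> x"
    proof (rule Lim_transform[OF r(2)[unfolded comp_def]])
      show "(\<lambda>n. b (Suc (r n)) - b (r n)) \<longlonglongrightarrow> 0"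
        using d0 by (simp add: dist_norm tendsto_norm_zero_iff)
    qed
    moreover have "(\<lambda>n. b (Suc (r n))) \<longlonglongrightarrow> Tl x" using T1 by (simp add: bS comp_def)
    ultimately have "Tl x = x" using LIMSEQ_unique by blast
    then show "x \<in> \<Lambda>" unfolding \<Lambda>_def mem_Collect_eq qe l_def using Dx by (simp add: Tl_def)
  qed
  have fin: "\<exists>x\<in>\<Lambda>. b \<longlonglongrightarrow> x" if lf: "\<forall>K. compact K \<longrightarrow> finite (\<Lambda> \<inter> K)"
  proof -
    have "finite (\<Lambda> \<inter> limit_points b)" using lf limit_points_compact[OF bnd] by blast
    moreover have "\<Lambda> \<inter> limit_points b = limit_points b" using sub by blast
    ultimately have "finite (limit_points b)" by simp
    then obtain x where x: "limit_points b = {x}"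
      using connected_finite_iff_sing[OF limit_points_connected[OF bnd stepc]] limit_points_nonempty[OF bnd]
      by blast
    then have "b \<longlonglongrightarrow> x" by (rule limit_points_single_conv[OF bnd])
    moreover have "x \<in> \<Lambda>" using x sub by blast
    ultimately show ?thesis by blast
  qed
  have main: "bounded (range b) \<and>
    (\<exists>l. quant_err2 M X (a ` {1..N}) \<le> l \<and> l \<le> quant_err2 M X (A \<union> {b 0}) \<and>
      connected (limit_points b) \<and> compact (limit_points b) \<and>
      limit_points b \<subseteq> {x. quant_err2 M X (A \<union> {x}) = l \<and> x = cond_mean M X (voronoi_cell A x)} \<and>
        (\<lambda>n. quant_err2 M X (A \<union> {b n})) \<longlonglongrightarrow> l \<and>
        ((\<forall>K. compact K \<longrightarrow> finite ({x. quant_err2 M X (A \<union> {x}) = l \<and> x = cond_mean M X (voronoi_cell A x)} \<inter> K)) \<longrightarrow>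
          (\<exists>x\<in>{x. quant_err2 M X (A \<union> {x}) = l \<and> x = cond_mean M X (voronoi_cell A x)}. b \<longlonglongrightarrow> x)))"
    using bnd low up limit_points_connected[OF bnd stepc] limit_points_compact[OF bnd] sub conv fin
    unfolding \<Lambda>_def by blast
  then show ?thesis unfolding Let_def A_def .
qed


end
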